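(* Let $f:A\to B$ be a ring homomorphism, $\mathfrak b$ an ideal of $B$, and $A\bowtie^f\mathfrak b:=\{(a,f(a)+b): a\in A,\ b\in\mathfrak b\}\subseteq A\times B$. (1) If $A\bowtie^f\mathfrak b$ is an arithmetical ring, then $A$ is an arithmetical ring. (2) If $A\bowtie^f\mathfrak b$ is a Gauss ring, then $A$ is a Gauss ring.
   Context: All rings are commutative with identity. A ring is arithmetical if every finitely generated ideal is locally principal (principal after localizing at every maximal ideal). A ring $R$ is a Gauss ring if, for an indeterminate $T$, every $g\in R[T]$ satisfies $c(gh)=c(g)c(h)$ for all $h\in R[T]$, where $c(\cdot)$ is the ideal generated by the coefficients. *)

theory Defs
  imports "HOL-Algebra.Algebra"
begin

definition amalgamation ::
  "('a, 'c) ring_scheme \<Rightarrow> ('b, 'd) ring_scheme \<Rightarrow> ('a \<Rightarrow> 'b) \<Rightarrow> 'b set \<Rightarrow> ('a \<times> 'b) ring"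
  where "amalgamation A B f J =
    (RDirProd A B) \<lparr> carrier := {(a, f a \<oplus>\<^bsub>B\<^esub> b) | a b. a \<in> carrier A \<and> b \<in> J} \<rparr>"

text \<open>Localization of R at the complement S of a prime ideal, written out via fractions:
  r/s = r'/s' in R_S iff u(rs' - r's) = 0 for some u in S.\<close>
definition frac_eq :: "('a, 'c) ring_scheme \<Rightarrow> 'a set \<Rightarrow> 'a \<times> 'a \<Rightarrow> 'a \<times> 'a \<Rightarrow> bool"
  where "frac_eq R S x y \<longleftrightarrow>
    (\<exists>u\<in>S. u \<otimes>\<^bsub>R\<^esub> ((fst x \<otimes>\<^bsub>R\<^esub> snd y) \<ominus>\<^bsub>R\<^esub> (fst y \<otimes>\<^bsub>R\<^esub> snd x)) = \<zero>\<^bsub>R\<^esub>)"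

text \<open>The extension I_M = {i/s : i in I, s notin M} of the ideal I to the localization R_M
  is a principal ideal of R_M, i.e. I_M = g R_M for some g = g1/g2 in R_M.\<close>
definition principal_at :: "('a, 'c) ring_scheme \<Rightarrow> 'a set \<Rightarrow> 'a set \<Rightarrow> bool"
  where "principal_at R M I \<longleftrightarrow>
    (let S = carrier R - M in
     \<exists>g1 \<in> carrier R. \<exists>g2 \<in> S.
       (\<exists>i\<in>I. \<exists>s\<in>S. frac_eq R S (g1, g2) (i, s)) \<and>
       (\<forall>i\<in>I. \<forall>s\<in>S. \<exists>r\<in>carrier R. \<exists>t\<in>S.
          frac_eq R S (i, s) (r \<otimes>\<^bsub>R\<^esub> g1, t \<otimes>\<^bsub>R\<^esub> g2)))"

definition locally_principal :: "('a, 'c) ring_scheme \<Rightarrow> 'a set \<Rightarrow> bool"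
  where "locally_principal R I \<longleftrightarrow> (\<forall>M. maximalideal M R \<longrightarrow> principal_at R M I)"

definition arithmetical :: "('a, 'c) ring_scheme \<Rightarrow> bool"
  where "arithmetical R \<longleftrightarrow>
    (\<forall>Gs. finite Gs \<and> Gs \<subseteq> carrier R \<longrightarrow> locally_principal R (genideal R Gs))"

definition content :: "('a, 'c) ring_scheme \<Rightarrow> (nat \<Rightarrow> 'a) \<Rightarrow> 'a set"
  where "content R g = genideal R (range (coeff (UP R) g))"

definition gauss_ring :: "('a, 'c) ring_scheme \<Rightarrow> bool"
  where "gauss_ring R \<longleftrightarrow>
    (\<forall>g \<in> carrier (UP R). \<forall>h \<in> carrier (UP R).
       content R (g \<otimes>\<^bsub>UP R\<^esub> h) = ideal_prod R (content R g) (content R h))"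

end

theory Submission
  imports Defs
begin

locale retr = R: cring R + A: cring A
  for R :: "('r,'x) ring_scheme" (structure) and A :: "('a,'c) ring_scheme" (structure) +
  fixes p s
  assumes p: "p \<in> ring_hom R A" and s: "s \<in> ring_hom A R"
    and ps: "\<And>a. a \<in> carrier A \<Longrightarrow> p (s a) = a"
begin

lemma P: "ring_hom_cring R A p"
  by (rule ring_hom_cring.intro[OF R.cring_axioms A.cring_axioms ring_hom_cring_axioms.intro[OF p]])
lemma S: "ring_hom_cring A R s"
  by (rule ring_hom_cring.intro[OF A.cring_axioms R.cring_axioms ring_hom_cring_axioms.intro[OF s]])
lemma PR: "ring_hom_ring R A p"
  by (rule ring_hom_ring.intro[OF R.ring_axioms A.ring_axioms ring_hom_ring_axioms.intro[OF p]])
lemma SR: "ring_hom_ring A R s"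
  by (rule ring_hom_ring.intro[OF A.ring_axioms R.ring_axioms ring_hom_ring_axioms.intro[OF s]])

lemma pc[simp]: "x \<in> carrier R \<Longrightarrow> p x \<in> carrier A" by (rule ring_hom_closed[OF p])
lemma sc[simp]: "x \<in> carrier A \<Longrightarrow> s x \<in> carrier R" by (rule ring_hom_closed[OF s])
lemma pm[simp]: "x \<in> carrier R \<Longrightarrow> y \<in> carrier R \<Longrightarrow> p (x \<otimes>\<^bsub>R\<^esub> y) = p x \<otimes>\<^bsub>A\<^esub> p y"
  by (rule ring_hom_mult[OF p])
lemma pa[simp]: "x \<in> carrier R \<Longrightarrow> y \<in> carrier R \<Longrightarrow> p (x \<oplus>\<^bsub>R\<^esub> y) = p x \<oplus>\<^bsub>A\<^esub> p y"
  by (rule ring_hom_add[OF p])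
lemma pminus[simp]: "x \<in> carrier R \<Longrightarrow> y \<in> carrier R \<Longrightarrow> p (x \<ominus>\<^bsub>R\<^esub> y) = p x \<ominus>\<^bsub>A\<^esub> p y"
  by (rule ring_hom_cring.hom_sub[OF P])
lemma p0[simp]: "p \<zero>\<^bsub>R\<^esub> = \<zero>\<^bsub>A\<^esub>" by (rule ring_hom_cring.hom_zero[OF P])
lemma s0[simp]: "s \<zero>\<^bsub>A\<^esub> = \<zero>\<^bsub>R\<^esub>" by (rule ring_hom_cring.hom_zero[OF S])
lemma sm[simp]: "x \<in> carrier A \<Longrightarrow> y \<in> carrier A \<Longrightarrow> s (x \<otimes>\<^bsub>A\<^esub> y) = s x \<otimes>\<^bsub>R\<^esub> s y"
  by (rule ring_hom_mult[OF s])

lemma img_ideal: assumes "ideal I R" shows "ideal (p ` I) A"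
proof (rule idealI)
  show "ring A" by (rule A.ring_axioms)
  show "subgroup (p ` I) (add_monoid A)"
    by (rule ring_hom_ring.img_is_add_subgroup[OF PR additive_subgroup.a_subgroup[OF ideal.axioms(1)[OF assms]]])
next
  fix a x assume a: "a \<in> p ` I" and x: "x \<in> carrier A"
  then obtain i where i: "i \<in> I" "a = p i" by auto
  have ic: "i \<in> carrier R" by (rule ideal.Icarr[OF assms i(1)])
  have "a \<otimes>\<^bsub>A\<^esub> x = p (i \<otimes>\<^bsub>R\<^esub> s x)" using i ic x ps by simp
  moreover have "i \<otimes>\<^bsub>R\<^esub> s x \<in> I" by (rule ideal.I_r_closed[OF assms i(1) sc[OF x]])
  ultimately show "a \<otimes>\<^bsub>A\<^esub> x \<in> p ` I" by blast
  have "x \<otimes>\<^bsub>A\<^esub> a = p (s x \<otimes>\<^bsub>R\<^esub> i)" using i ic x ps by simp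
  moreover have "s x \<otimes>\<^bsub>R\<^esub> i \<in> I" by (rule ideal.I_l_closed[OF assms i(1) sc[OF x]])
  ultimately show "x \<otimes>\<^bsub>A\<^esub> a \<in> p ` I" by blast
qed

lemma vimage_ideal: assumes "ideal I A" shows "ideal {r \<in> carrier R. p r \<in> I} R"
  by (rule ring_hom_ring.ideal_vimage[OF PR assms])

lemma img_genideal: assumes "Xs \<subseteq> carrier R"
  shows "p ` genideal R Xs = genideal A (p ` Xs)"
proof
  have pX: "p ` Xs \<subseteq> carrier A" using assms by auto
  have "genideal R Xs \<subseteq> {r \<in> carrier R. p r \<in> genideal A (p ` Xs)}"
  proof (rule R.genideal_minimal[OF vimage_ideal[OF A.genideal_ideal[OF pX]]])
    show "Xs \<subseteq> {r \<in> carrier R. p r \<in> genideal A (p ` Xs)}"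
      using assms A.genideal_self[OF pX] by blast
  qed
  then show "p ` genideal R Xs \<subseteq> genideal A (p ` Xs)" by auto
  show "genideal A (p ` Xs) \<subseteq> p ` genideal R Xs"
    by (rule A.genideal_minimal[OF img_ideal[OF R.genideal_ideal[OF assms]]])
      (use R.genideal_self[OF assms] in blast)
qed

lemma prod_carr: assumes "I \<subseteq> carrier R" "K \<subseteq> carrier R"
  shows "ideal_prod R I K \<subseteq> carrier R"
proof
  fix x assume "x \<in> ideal_prod R I K" then show "x \<in> carrier R"
    by (induct x rule: ideal_prod.induct) (use assms in auto)
qed

lemma img_prod: assumes "I \<subseteq> carrier R" "K \<subseteq> carrier R"
  shows "p ` ideal_prod R I K = ideal_prod A (p ` I) (p ` K)"
proof
  show "p ` ideal_prod R I K \<subseteq> ideal_prod A (p ` I) (p ` K)"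
  proof
    fix y assume "y \<in> p ` ideal_prod R I K"
    then obtain x where x: "x \<in> ideal_prod R I K" "y = p x" by auto
    have "x \<in> carrier R \<and> p x \<in> ideal_prod A (p ` I) (p ` K)" using x(1)
    proof (induct x rule: ideal_prod.induct)
      case (prod i j)
      then have "i \<in> carrier R" "j \<in> carrier R" using assms by auto
      then show ?case using prod by (simp add: ideal_prod.prod imageI)
    next
      case (sum s1 s2) then show ?case by (auto intro: ideal_prod.sum)
    qed
    then show "y \<in> ideal_prod A (p ` I) (p ` K)" using x by simp
  qed
  show "ideal_prod A (p ` I) (p ` K) \<subseteq> p ` ideal_prod R I K"
  proof
    fix y assume "y \<in> ideal_prod A (p ` I) (p ` K)"
    then show "y \<in> p ` ideal_prod R I K"
    proof (induct y rule: ideal_prod.induct)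
      case (prod i j)
      then obtain i' j' where ij: "i' \<in> I" "j' \<in> K" "i = p i'" "j = p j'" by auto
      then have "i' \<in> carrier R" "j' \<in> carrier R" using assms by auto
      then have "i \<otimes>\<^bsub>A\<^esub> j = p (i' \<otimes>\<^bsub>R\<^esub> j')" using ij by simp
      moreover have "i' \<otimes>\<^bsub>R\<^esub> j' \<in> ideal_prod R I K" using ij by (simp add: ideal_prod.prod)
      ultimately show ?case by blast
    next
      case (sum s1 s2)
      then obtain x1 x2 where xx: "x1 \<in> ideal_prod R I K" "x2 \<in> ideal_prod R I K" "s1 = p x1" "s2 = p x2" by auto
      moreover have "x1 \<in> carrier R" "x2 \<in> carrier R" using prod_carr[OF assms] xx by auto
      ultimately have "s1 \<oplus>\<^bsub>A\<^esub> s2 = p (x1 \<oplus>\<^bsub>R\<^esub> x2)" "x1 \<oplus>\<^bsub>R\<^esub> x2 \<in> ideal_prod R I K"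
        by (simp_all add: ideal_prod.sum)
      then show ?case by blast
    qed
  qed
qed


lemma one_p: "p \<one>\<^bsub>R\<^esub> = \<one>\<^bsub>A\<^esub>" by (rule ring_hom_one[OF p])
lemma one_s: "s \<one>\<^bsub>A\<^esub> = \<one>\<^bsub>R\<^esub>" by (rule ring_hom_one[OF s])

lemma vimage_ideal_s: assumes "ideal I R" shows "ideal {r \<in> carrier A. s r \<in> I} A"
  by (rule ring_hom_ring.ideal_vimage[OF SR assms])

lemma max_vimage: assumes M: "maximalideal M A"
  shows "maximalideal {r \<in> carrier R. p r \<in> M} R"
proof -
  let ?M' = "{r \<in> carrier R. p r \<in> M}"
  have iM: "ideal M A" using M maximalideal.axioms(1) by blast
  have iM': "ideal ?M' R" by (rule vimage_ideal[OF iM])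
  have n1: "\<one>\<^bsub>A\<^esub> \<notin> M"
    using M ideal.one_imp_carrier[OF iM] maximalideal.I_notcarr by metis
  show ?thesis
  proof (rule maximalideal.intro[OF iM'], rule maximalideal_axioms.intro)
    show "carrier R \<noteq> ?M'"
    proof
      assume "carrier R = ?M'"
      then have "\<one>\<^bsub>R\<^esub> \<in> ?M'" using R.one_closed by simp
      then show False using n1 one_p by simp
    qed
    fix K assume K: "ideal K R" "?M' \<subseteq> K" "K \<subseteq> carrier R"
    let ?K' = "{r \<in> carrier A. s r \<in> K}"
    have iK': "ideal ?K' A" by (rule vimage_ideal_s[OF K(1)])
    have "M \<subseteq> ?K'"
    proof
      fix a assume a: "a \<in> M"
      then have ac: "a \<in> carrier A" using ideal.Icarr[OF iM] by blast
      then have "s a \<in> ?M'" using a ps by simp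
      then show "a \<in> ?K'" using K(2) ac by blast
    qed
    then have "?K' = M \<or> ?K' = carrier A"
      using maximalideal.I_maximal[OF M iK'] by blast
    then show "K = ?M' \<or> K = carrier R"
    proof
      assume "?K' = carrier A"
      then have "\<one>\<^bsub>R\<^esub> \<in> K" using one_s by (metis (no_types, lifting) A.one_closed mem_Collect_eq)
      then show ?thesis using ideal.one_imp_carrier[OF K(1)] by blast
    next
      assume KM: "?K' = M"
      have "K \<subseteq> ?M'"
      proof
        fix x assume x: "x \<in> K"
        have xc: "x \<in> carrier R" using x K(3) by blast
        let ?y = "s (p x)"
        have yc: "?y \<in> carrier R" using xc by simp
        have "p (x \<ominus>\<^bsub>R\<^esub> ?y) = \<zero>\<^bsub>A\<^esub>" using xc ps by (simp add: A.r_neg A.minus_eq)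
        moreover have "x \<ominus>\<^bsub>R\<^esub> ?y \<in> carrier R" using xc yc by simp
        ultimately have "x \<ominus>\<^bsub>R\<^esub> ?y \<in> ?M'" using additive_subgroup.zero_closed[OF ideal.axioms(1)[OF iM]]
          by simp
        then have d: "x \<ominus>\<^bsub>R\<^esub> ?y \<in> K" using K(2) by blast
        have "?y = x \<ominus>\<^bsub>R\<^esub> (x \<ominus>\<^bsub>R\<^esub> ?y)" using xc yc
          by (simp add: R.minus_eq R.minus_add R.minus_minus R.r_neg2)
        also have "\<dots> \<in> K" using x d ideal.axioms(1)[OF K(1)]
          unfolding R.minus_eq
          by (meson additive_subgroup.a_closed additive_subgroup.a_inv_closed)
        finally have "p x \<in> ?K'" using xc by simp
        then show "x \<in> ?M'" using KM xc by blast
      qed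
      then show ?thesis using K(2) by blast
    qed
  qed
qed

lemma frac_p:
  assumes "frac_eq R S' (x1, x2) (y1, y2)" "x1 \<in> carrier R" "x2 \<in> carrier R"
    "y1 \<in> carrier R" "y2 \<in> carrier R" "S' \<subseteq> carrier R" "p ` S' \<subseteq> SA"
  shows "frac_eq A SA (p x1, p x2) (p y1, p y2)"
proof -
  obtain u where u: "u \<in> S'" "u \<otimes>\<^bsub>R\<^esub> ((x1 \<otimes>\<^bsub>R\<^esub> y2) \<ominus>\<^bsub>R\<^esub> (y1 \<otimes>\<^bsub>R\<^esub> x2)) = \<zero>\<^bsub>R\<^esub>"
    using assms(1) unfolding frac_eq_def by auto
  have uc: "u \<in> carrier R" using u assms(6) by blast
  have "p (u \<otimes>\<^bsub>R\<^esub> ((x1 \<otimes>\<^bsub>R\<^esub> y2) \<ominus>\<^bsub>R\<^esub> (y1 \<otimes>\<^bsub>R\<^esub> x2))) = \<zero>\<^bsub>A\<^esub>"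
    using u by simp
  then have "p u \<otimes>\<^bsub>A\<^esub> ((p x1 \<otimes>\<^bsub>A\<^esub> p y2) \<ominus>\<^bsub>A\<^esub> (p y1 \<otimes>\<^bsub>A\<^esub> p x2)) = \<zero>\<^bsub>A\<^esub>"
    using uc assms(2-5) by simp
  moreover have "p u \<in> SA" using u assms(7) by blast
  ultimately show ?thesis unfolding frac_eq_def by auto
qed


lemma arith: assumes "arithmetical R" shows "arithmetical A"
  unfolding arithmetical_def locally_principal_def
proof (intro allI impI)
  fix Gs M assume G: "finite Gs \<and> Gs \<subseteq> carrier A" and M: "maximalideal M A"
  define M' where "M' = {r \<in> carrier R. p r \<in> M}"
  define Hs where "Hs = s ` Gs"
  have Hc: "Hs \<subseteq> carrier R" using G unfolding Hs_def by auto
  have Hf: "finite Hs" using G unfolding Hs_def by auto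
  have "locally_principal R (genideal R Hs)" using assms Hc Hf unfolding arithmetical_def by simp
  then have "maximalideal M' R \<longrightarrow> principal_at R M' (genideal R Hs)"
    unfolding locally_principal_def by (rule spec)
  then have "principal_at R M' (genideal R Hs)" using max_vimage[OF M] unfolding M'_def by (rule mp)
  then obtain g1 g2 where g1: "g1 \<in> carrier R" and g2: "g2 \<in> carrier R - M'"
    and e1: "\<exists>i\<in>genideal R Hs. \<exists>t\<in>carrier R - M'. frac_eq R (carrier R - M') (g1,g2) (i,t)"
    and e2: "\<forall>i\<in>genideal R Hs. \<forall>t\<in>carrier R - M'. \<exists>r\<in>carrier R. \<exists>t'\<in>carrier R - M'.
         frac_eq R (carrier R - M') (i,t) (r \<otimes>\<^bsub>R\<^esub> g1, t' \<otimes>\<^bsub>R\<^esub> g2)"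
    unfolding principal_at_def Let_def by blast
  have pH: "p ` Hs = Gs"
  proof -
    have "p ` Hs = (\<lambda>a. p (s a)) ` Gs" unfolding Hs_def by (simp add: image_image)
    also have "\<dots> = (\<lambda>a. a) ` Gs" using G ps by (intro image_cong) auto
    finally show ?thesis by simp
  qed
  have I: "p ` genideal R Hs = genideal A Gs" using img_genideal[OF Hc] pH by simp
  have GI: "genideal R Hs \<subseteq> carrier R"
    using ideal.Icarr[OF R.genideal_ideal[OF Hc]] by blast
  have SS: "carrier R - M' \<subseteq> carrier R" by blast
  have pS: "p ` (carrier R - M') \<subseteq> carrier A - M" unfolding M'_def by auto
  have g2c: "g2 \<in> carrier R" using g2 by blast
  have c1: "\<exists>i\<in>genideal A Gs. \<exists>t\<in>carrier A - M. frac_eq A (carrier A - M) (p g1, p g2) (i, t)"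
  proof -
    from e1 obtain i t where i: "i \<in> genideal R Hs" and t: "t \<in> carrier R - M'"
      and fe: "frac_eq R (carrier R - M') (g1,g2) (i,t)" by blast
    have "frac_eq A (carrier A - M) (p g1, p g2) (p i, p t)"
      using frac_p[OF fe g1 g2c _ _ SS pS] i t GI by blast
    moreover have "p i \<in> genideal A Gs" using i I by blast
    moreover have "p t \<in> carrier A - M" using t pS by blast
    ultimately show ?thesis by blast
  qed
  have c2: "\<forall>i\<in>genideal A Gs. \<forall>t\<in>carrier A - M. \<exists>r\<in>carrier A. \<exists>t'\<in>carrier A - M.
         frac_eq A (carrier A - M) (i, t) (r \<otimes>\<^bsub>A\<^esub> p g1, t' \<otimes>\<^bsub>A\<^esub> p g2)"
  proof (intro ballI)
    fix i t assume i: "i \<in> genideal A Gs" and t: "t \<in> carrier A - M"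
    obtain i0 where i0: "i0 \<in> genideal R Hs" "i = p i0" using i I by blast
    have tc: "t \<in> carrier A" using t by blast
    have st: "s t \<in> carrier R - M'" using t ps unfolding M'_def by auto
    obtain r t' where r: "r \<in> carrier R" and t': "t' \<in> carrier R - M'"
      and fe: "frac_eq R (carrier R - M') (i0, s t) (r \<otimes>\<^bsub>R\<^esub> g1, t' \<otimes>\<^bsub>R\<^esub> g2)"
      using e2 i0(1) st by blast
    have t'c: "t' \<in> carrier R" using t' by blast
    have "frac_eq A (carrier A - M) (p i0, p (s t)) (p (r \<otimes>\<^bsub>R\<^esub> g1), p (t' \<otimes>\<^bsub>R\<^esub> g2))"
      using frac_p[OF fe _ _ _ _ SS pS] i0 GI tc r g1 t'c g2c by auto
    then have "frac_eq A (carrier A - M) (i, t) (p r \<otimes>\<^bsub>A\<^esub> p g1, p t' \<otimes>\<^bsub>A\<^esub> p g2)"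
      using i0 ps[OF tc] r g1 t'c g2c by simp
    moreover have "p r \<in> carrier A" using r by simp
    moreover have "p t' \<in> carrier A - M" using t' pS by blast
    ultimately show "\<exists>r\<in>carrier A. \<exists>t'\<in>carrier A - M.
         frac_eq A (carrier A - M) (i, t) (r \<otimes>\<^bsub>A\<^esub> p g1, t' \<otimes>\<^bsub>A\<^esub> p g2)" by blast
  qed
  have pg1: "p g1 \<in> carrier A" using g1 by simp
  have pg2: "p g2 \<in> carrier A - M" using g2 pS by blast
  show "principal_at A M (genideal A Gs)"
    unfolding principal_at_def Let_def using c1 c2 pg1 pg2 by blast
qed


lemma up_s: assumes "g \<in> up A" shows "(\<lambda>n. s (g n)) \<in> up R"
proof (rule mem_upI)
  fix n show "s (g n) \<in> carrier R" using mem_upD[OF assms] by simp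
next
  obtain n where n: "bound \<zero>\<^bsub>A\<^esub> n g" using A.bound_upD[OF assms] by blast
  have "bound \<zero>\<^bsub>R\<^esub> n (\<lambda>n. s (g n))"
  proof
    fix m assume "n < m" then have "g m = \<zero>\<^bsub>A\<^esub>" by (rule bound.bound[OF n])
    then show "s (g m) = \<zero>\<^bsub>R\<^esub>" by simp
  qed
  then show "\<exists>n. bound \<zero>\<^bsub>R\<^esub> n (\<lambda>n. s (g n))" by blast
qed

lemma content_eq: assumes "Xp \<in> up R" shows "content R Xp = genideal R (range Xp)"
  using assms unfolding content_def by (simp add: UP_def)

lemma content_eqA: assumes "Xp \<in> up A" shows "content A Xp = genideal A (range Xp)"
  using assms unfolding content_def by (simp add: UP_def)

lemma content_img: assumes "Xp \<in> up R" "Yp \<in> up A" "\<And>n. Yp n = p (Xp n)"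
  shows "p ` content R Xp = content A Yp"
proof -
  have rc: "range Xp \<subseteq> carrier R" using mem_upD[OF assms(1)] by blast
  have "range Yp = p ` range Xp" using assms(3) by auto
  then show ?thesis using content_eq[OF assms(1)] content_eqA[OF assms(2)] img_genideal[OF rc] by simp
qed

lemma content_carr: assumes "Xp \<in> up R" shows "content R Xp \<subseteq> carrier R"
proof -
  have rc: "range Xp \<subseteq> carrier R" using mem_upD[OF assms] by blast
  show ?thesis unfolding content_eq[OF assms] using ideal.Icarr[OF R.genideal_ideal[OF rc]] by blast
qed

lemma mult_img: assumes "g \<in> up A" "h \<in> up A"
  shows "p (((\<lambda>n. s (g n)) \<otimes>\<^bsub>UP R\<^esub> (\<lambda>n. s (h n))) n) = (g \<otimes>\<^bsub>UP A\<^esub> h) n"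
proof -
  have G: "(\<lambda>n. s (g n)) \<in> up R" by (rule up_s[OF assms(1)])
  have H: "(\<lambda>n. s (h n)) \<in> up R" by (rule up_s[OF assms(2)])
  have "((\<lambda>n. s (g n)) \<otimes>\<^bsub>UP R\<^esub> (\<lambda>n. s (h n))) n
     = (\<Oplus>\<^bsub>R\<^esub>i \<in> {..n}. s (g i) \<otimes>\<^bsub>R\<^esub> s (h (n-i)))" using G H by (simp add: UP_def)
  moreover have "(g \<otimes>\<^bsub>UP A\<^esub> h) n = (\<Oplus>\<^bsub>A\<^esub>i \<in> {..n}. g i \<otimes>\<^bsub>A\<^esub> h (n-i))"
    using assms by (simp add: UP_def)
  moreover have "p (\<Oplus>\<^bsub>R\<^esub>i \<in> {..n}. s (g i) \<otimes>\<^bsub>R\<^esub> s (h (n-i)))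
      = (\<Oplus>\<^bsub>A\<^esub>i \<in> {..n}. (p \<circ> (\<lambda>i. s (g i) \<otimes>\<^bsub>R\<^esub> s (h (n-i)))) i)"
    by (rule ring_hom_cring.hom_finsum[OF P]) (use mem_upD[OF assms(1)] mem_upD[OF assms(2)] in auto)
  moreover have "(\<Oplus>\<^bsub>A\<^esub>i \<in> {..n}. (p \<circ> (\<lambda>i. s (g i) \<otimes>\<^bsub>R\<^esub> s (h (n-i)))) i)
      = (\<Oplus>\<^bsub>A\<^esub>i \<in> {..n}. g i \<otimes>\<^bsub>A\<^esub> h (n-i))"
  proof (rule A.finsum_cong')
    show "{..n} = {..n}" by simp
    show "(\<lambda>i. g i \<otimes>\<^bsub>A\<^esub> h (n - i)) \<in> {..n} \<rightarrow> carrier A"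
      using mem_upD[OF assms(1)] mem_upD[OF assms(2)] by auto
    fix i assume "i \<in> {..n}"
    have gi: "g i \<in> carrier A" "h (n-i) \<in> carrier A" using mem_upD[OF assms(1)] mem_upD[OF assms(2)] by auto
    then show "(p \<circ> (\<lambda>i. s (g i) \<otimes>\<^bsub>R\<^esub> s (h (n-i)))) i = g i \<otimes>\<^bsub>A\<^esub> h (n - i)"
      by (simp add: ps)
  qed
  ultimately show ?thesis by simp
qed

lemma gauss: assumes "gauss_ring R" shows "gauss_ring A"
  unfolding gauss_ring_def
proof (intro ballI)
  fix g h assume g: "g \<in> carrier (UP A)" and h: "h \<in> carrier (UP A)"
  have gu: "g \<in> up A" and hu: "h \<in> up A" using g h by (simp_all add: UP_def)
  define G where "G = (\<lambda>n. s (g n))"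
  define H where "H = (\<lambda>n. s (h n))"
  have Gu: "G \<in> up R" and Hu: "H \<in> up R" unfolding G_def H_def by (simp_all add: up_s gu hu)
  have GHu: "G \<otimes>\<^bsub>UP R\<^esub> H \<in> up R" using Gu Hu R.up_mult_closed by (simp add: UP_def)
  have ghu: "g \<otimes>\<^bsub>UP A\<^esub> h \<in> up A" using gu hu A.up_mult_closed by (simp add: UP_def)
  have "content R (G \<otimes>\<^bsub>UP R\<^esub> H) = ideal_prod R (content R G) (content R H)"
    using assms Gu Hu unfolding gauss_ring_def by (simp add: UP_def)
  moreover have "p ` content R (G \<otimes>\<^bsub>UP R\<^esub> H) = content A (g \<otimes>\<^bsub>UP A\<^esub> h)"
    by (rule content_img[OF GHu ghu]) (simp add: mult_img[OF gu hu] G_def H_def)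
  moreover have "p ` content R G = content A g"
    by (rule content_img[OF Gu gu]) (simp add: G_def ps mem_upD[OF gu])
  moreover have "p ` content R H = content A h"
    by (rule content_img[OF Hu hu]) (simp add: H_def ps mem_upD[OF hu])
  ultimately show "content A (g \<otimes>\<^bsub>UP A\<^esub> h) = ideal_prod A (content A g) (content A h)"
    using img_prod[OF content_carr[OF Gu] content_carr[OF Hu]] by simp
qed

end

lemma amal_carrier: "carrier (amalgamation A B f J) = {(a, f a \<oplus>\<^bsub>B\<^esub> b) | a b. a \<in> carrier A \<and> b \<in> J}"
  by (simp add: amalgamation_def)
lemma amal_mult: "x \<otimes>\<^bsub>amalgamation A B f J\<^esub> y = (fst x \<otimes>\<^bsub>A\<^esub> fst y, snd x \<otimes>\<^bsub>B\<^esub> snd y)"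
  by (simp add: amalgamation_def RDirProd_def DirProd_def monoid.defs case_prod_beta)
lemma amal_add: "x \<oplus>\<^bsub>amalgamation A B f J\<^esub> y = (fst x \<oplus>\<^bsub>A\<^esub> fst y, snd x \<oplus>\<^bsub>B\<^esub> snd y)"
  by (simp add: amalgamation_def RDirProd_def DirProd_def monoid.defs case_prod_beta)
lemma amal_one: "\<one>\<^bsub>amalgamation A B f J\<^esub> = (\<one>\<^bsub>A\<^esub>, \<one>\<^bsub>B\<^esub>)"
  by (simp add: amalgamation_def RDirProd_def DirProd_def monoid.defs)
lemma amal_is: "amalgamation A B f J = (RDirProd A B) \<lparr> carrier := {(a, f a \<oplus>\<^bsub>B\<^esub> b) | a b. a \<in> carrier A \<and> b \<in> J} \<rparr>"
  by (simp add: amalgamation_def)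
lemma rd_mult: "x \<otimes>\<^bsub>RDirProd A B\<^esub> y = (fst x \<otimes>\<^bsub>A\<^esub> fst y, snd x \<otimes>\<^bsub>B\<^esub> snd y)"
  by (simp add: RDirProd_def DirProd_def monoid.defs case_prod_beta)
lemma rd_add: "x \<oplus>\<^bsub>RDirProd A B\<^esub> y = (fst x \<oplus>\<^bsub>A\<^esub> fst y, snd x \<oplus>\<^bsub>B\<^esub> snd y)"
  by (simp add: RDirProd_def DirProd_def monoid.defs case_prod_beta)
lemma rd_one: "\<one>\<^bsub>RDirProd A B\<^esub> = (\<one>\<^bsub>A\<^esub>, \<one>\<^bsub>B\<^esub>)"
  by (simp add: RDirProd_def DirProd_def monoid.defs)
lemma rd_inv: assumes "ring A" "ring B" "x \<in> carrier A" "y \<in> carrier B"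
  shows "\<ominus>\<^bsub>RDirProd A B\<^esub> (x, y) = (\<ominus>\<^bsub>A\<^esub> x, \<ominus>\<^bsub>B\<^esub> y)"
  unfolding a_inv_def RDirProd_add_monoid
  by (rule inv_DirProd[OF abelian_group.a_group[OF ring.is_abelian_group[OF assms(1)]]
      abelian_group.a_group[OF ring.is_abelian_group[OF assms(2)]]]) (use assms in simp_all)


lemma amal_facts:
  fixes A :: "('a, 'c) ring_scheme" and B :: "('b, 'd) ring_scheme"
    and f :: "'a \<Rightarrow> 'b" and J :: "'b set"
  assumes cA: "cring A" and cB: "cring B" and fh: "f \<in> ring_hom A B" and iJ: "ideal J B"
  shows "retr (amalgamation A B f J) A fst (\<lambda>a. (a, f a))"
proof -
  interpret A: cring A by (rule cA)
  interpret B: cring B by (rule cB)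
  interpret F: ring_hom_cring A B f
    by (rule ring_hom_cring.intro[OF cA cB ring_hom_cring_axioms.intro[OF fh]])
  interpret J: ideal J B by (rule iJ)
  define H where "H = {(a, f a \<oplus>\<^bsub>B\<^esub> b) | a b. a \<in> carrier A \<and> b \<in> J}"
  have amH: "amalgamation A B f J = (RDirProd A B) \<lparr> carrier := H \<rparr>"
    unfolding H_def by (rule amal_is)
  have RD: "ring (RDirProd A B)" by (rule RDirProd_ring[OF A.ring_axioms B.ring_axioms])
  have Jc: "\<And>b. b \<in> J \<Longrightarrow> b \<in> carrier B" by (rule J.Icarr)
  have Hc: "H \<subseteq> carrier (RDirProd A B)"
  proof
    fix x assume "x \<in> H"
    then obtain a b where x: "x = (a, f a \<oplus>\<^bsub>B\<^esub> b)" "a \<in> carrier A" "b \<in> J" unfolding H_def by blast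
    then have "b \<in> carrier B" using Jc by simp
    then show "x \<in> carrier (RDirProd A B)" using x by (simp add: RDirProd_carrier)
  qed
  have memH: "\<And>a b. a \<in> carrier A \<Longrightarrow> b \<in> J \<Longrightarrow> (a, f a \<oplus>\<^bsub>B\<^esub> b) \<in> H"
    unfolding H_def by blast
  have sub: "subring H (RDirProd A B)"
  proof (rule ring.subringI[OF RD Hc])
    have "(\<one>\<^bsub>A\<^esub>, f \<one>\<^bsub>A\<^esub> \<oplus>\<^bsub>B\<^esub> \<zero>\<^bsub>B\<^esub>) \<in> H"
      by (rule memH) (simp_all add: J.additive_subgroup_axioms additive_subgroup.zero_closed)
    then show "\<one>\<^bsub>RDirProd A B\<^esub> \<in> H" by (simp add: rd_one)
  next
    fix h assume "h \<in> H"
    then obtain a b where x: "h = (a, f a \<oplus>\<^bsub>B\<^esub> b)" "a \<in> carrier A" "b \<in> J" unfolding H_def by blast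
    have bc: "b \<in> carrier B" using Jc x(3) by simp
    have "\<ominus>\<^bsub>RDirProd A B\<^esub> h = (\<ominus>\<^bsub>A\<^esub> a, \<ominus>\<^bsub>B\<^esub> (f a \<oplus>\<^bsub>B\<^esub> b))"
      unfolding x(1) by (rule rd_inv[OF A.ring_axioms B.ring_axioms]) (use x bc in simp_all)
    also have "\<dots> = (\<ominus>\<^bsub>A\<^esub> a, f (\<ominus>\<^bsub>A\<^esub> a) \<oplus>\<^bsub>B\<^esub> \<ominus>\<^bsub>B\<^esub> b)"
      using x bc by (simp add: B.minus_add)
    also have "\<dots> \<in> H"
      by (rule memH) (use x in \<open>simp_all add: J.a_inv_closed\<close>)
    finally show "\<ominus>\<^bsub>RDirProd A B\<^esub> h \<in> H" .
  next
    fix h1 h2 assume "h1 \<in> H" "h2 \<in> H"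
    then obtain a b a' b' where x: "h1 = (a, f a \<oplus>\<^bsub>B\<^esub> b)" "a \<in> carrier A" "b \<in> J"
      and y: "h2 = (a', f a' \<oplus>\<^bsub>B\<^esub> b')" "a' \<in> carrier A" "b' \<in> J" unfolding H_def by blast
    have bc: "b \<in> carrier B" "b' \<in> carrier B" using Jc x(3) y(3) by simp_all
    have fc: "f a \<in> carrier B" "f a' \<in> carrier B" using x y by simp_all
    have "h1 \<otimes>\<^bsub>RDirProd A B\<^esub> h2 = (a \<otimes>\<^bsub>A\<^esub> a', (f a \<oplus>\<^bsub>B\<^esub> b) \<otimes>\<^bsub>B\<^esub> (f a' \<oplus>\<^bsub>B\<^esub> b'))"
      using x y by (simp add: rd_mult)
    also have "\<dots> = (a \<otimes>\<^bsub>A\<^esub> a', f (a \<otimes>\<^bsub>A\<^esub> a') \<oplus>\<^bsub>B\<^esub>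
        ((f a \<otimes>\<^bsub>B\<^esub> b' \<oplus>\<^bsub>B\<^esub> b \<otimes>\<^bsub>B\<^esub> f a') \<oplus>\<^bsub>B\<^esub> b \<otimes>\<^bsub>B\<^esub> b'))"
      using x y bc fc by (simp add: B.l_distr B.r_distr B.a_assoc B.a_lcomm)
    also have "\<dots> \<in> H"
    proof (rule memH)
      show "a \<otimes>\<^bsub>A\<^esub> a' \<in> carrier A" using x y by simp
      have "f a \<otimes>\<^bsub>B\<^esub> b' \<in> J" by (rule J.I_l_closed[OF y(3) fc(1)])
      moreover have "b \<otimes>\<^bsub>B\<^esub> f a' \<in> J" by (rule J.I_r_closed[OF x(3) fc(2)])
      moreover have "b \<otimes>\<^bsub>B\<^esub> b' \<in> J" by (rule J.I_r_closed[OF x(3) bc(2)])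
      ultimately show "(f a \<otimes>\<^bsub>B\<^esub> b' \<oplus>\<^bsub>B\<^esub> b \<otimes>\<^bsub>B\<^esub> f a') \<oplus>\<^bsub>B\<^esub> b \<otimes>\<^bsub>B\<^esub> b' \<in> J"
        by (simp add: J.a_closed)
    qed
    finally show "h1 \<otimes>\<^bsub>RDirProd A B\<^esub> h2 \<in> H" .
    have "h1 \<oplus>\<^bsub>RDirProd A B\<^esub> h2 = (a \<oplus>\<^bsub>A\<^esub> a', (f a \<oplus>\<^bsub>B\<^esub> b) \<oplus>\<^bsub>B\<^esub> (f a' \<oplus>\<^bsub>B\<^esub> b'))"
      using x y by (simp add: rd_add)
    also have "\<dots> = (a \<oplus>\<^bsub>A\<^esub> a', f (a \<oplus>\<^bsub>A\<^esub> a') \<oplus>\<^bsub>B\<^esub> (b \<oplus>\<^bsub>B\<^esub> b'))"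
      using x y bc fc by (simp add: B.a_ac)
    also have "\<dots> \<in> H"
      by (rule memH) (use x y in \<open>simp_all add: J.a_closed\<close>)
    finally show "h1 \<oplus>\<^bsub>RDirProd A B\<^esub> h2 \<in> H" .
  qed
  have "subcring H (RDirProd A B)"
  proof (rule ring.subcringI[OF RD sub])
    fix h1 h2 assume "h1 \<in> H" "h2 \<in> H"
    then have "h1 \<in> carrier (RDirProd A B)" "h2 \<in> carrier (RDirProd A B)" using Hc by auto
    then show "h1 \<otimes>\<^bsub>RDirProd A B\<^esub> h2 = h2 \<otimes>\<^bsub>RDirProd A B\<^esub> h1"
      by (auto simp add: rd_mult RDirProd_carrier A.m_comm B.m_comm)
  qed
  then have cR: "cring (amalgamation A B f J)"
    unfolding amH using ring.subcring_iff[OF RD Hc] by simp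
  have cH: "carrier (amalgamation A B f J) = H" unfolding amH by simp
  have pH: "fst \<in> ring_hom (amalgamation A B f J) A"
  proof (rule ring_hom_memI)
    fix x assume "x \<in> carrier (amalgamation A B f J)"
    then show "fst x \<in> carrier A" unfolding cH H_def by auto
  next
    fix x y show "fst (x \<otimes>\<^bsub>amalgamation A B f J\<^esub> y) = fst x \<otimes>\<^bsub>A\<^esub> fst y" by (simp add: amal_mult)
  next
    fix x y show "fst (x \<oplus>\<^bsub>amalgamation A B f J\<^esub> y) = fst x \<oplus>\<^bsub>A\<^esub> fst y" by (simp add: amal_add)
  next
    show "fst \<one>\<^bsub>amalgamation A B f J\<^esub> = \<one>\<^bsub>A\<^esub>" by (simp add: amal_one)
  qed
  have sH: "(\<lambda>a. (a, f a)) \<in> ring_hom A (amalgamation A B f J)"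
  proof (rule ring_hom_memI)
    fix x assume x: "x \<in> carrier A"
    have "(x, f x \<oplus>\<^bsub>B\<^esub> \<zero>\<^bsub>B\<^esub>) \<in> H"
      by (rule memH[OF x]) (simp add: J.additive_subgroup_axioms additive_subgroup.zero_closed)
    then show "(x, f x) \<in> carrier (amalgamation A B f J)" unfolding cH using x by simp
  next
    fix x y assume "x \<in> carrier A" "y \<in> carrier A"
    then show "(x \<otimes>\<^bsub>A\<^esub> y, f (x \<otimes>\<^bsub>A\<^esub> y)) = (x, f x) \<otimes>\<^bsub>amalgamation A B f J\<^esub> (y, f y)"
      by (simp add: amal_mult)
  next
    fix x y assume "x \<in> carrier A" "y \<in> carrier A"
    then show "(x \<oplus>\<^bsub>A\<^esub> y, f (x \<oplus>\<^bsub>A\<^esub> y)) = (x, f x) \<oplus>\<^bsub>amalgamation A B f J\<^esub> (y, f y)"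
      by (simp add: amal_add)
  next
    show "(\<one>\<^bsub>A\<^esub>, f \<one>\<^bsub>A\<^esub>) = \<one>\<^bsub>amalgamation A B f J\<^esub>" by (simp add: amal_one)
  qed
  show ?thesis
    by (rule retr.intro[OF cR cA retr_axioms.intro[OF pH sH]]) simp
qed

theorem proposition4p7:
  fixes A :: "('a, 'c) ring_scheme" and B :: "('b, 'd) ring_scheme"
    and f :: "'a \<Rightarrow> 'b" and J :: "'b set"
  assumes "cring A" and "cring B" and "f \<in> ring_hom A B" and "ideal J B"
  shows "(arithmetical (amalgamation A B f J) \<longrightarrow> arithmetical A)
       \<and> (gauss_ring (amalgamation A B f J) \<longrightarrow> gauss_ring A)"
  using retr.arith[OF amal_facts[OF assms]] retr.gauss[OF amal_facts[OF assms]] by blast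

end
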